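(* Let $\mathcal R\subset\mathcal G$ be finite with $\mathrm{id}\in\mathcal R$. Then the seminorms $\|\cdot\|_{\mathcal R}$ and $[\cdot]_{\mathcal R}$ on $U_{\mathrm{per}}$ are equivalent, i.e. there are constants $c,C>0$ with $c\|u\|_{\mathcal R}\le[u]_{\mathcal R}\le C\|u\|_{\mathcal R}$ for all $u\in U_{\mathrm{per}}$.
   Context: Euclidean group: $\mathrm E(n)$ consists of pairs $(A|b)$, $A\in\mathrm O(n)$, $b\in\mathbb R^n$, acting on $\mathbb R^n$ by $(A|b)\cdot x=Ax+b$, with product $(A_1|b_1)(A_2|b_2)=(A_1A_2|b_1+A_1b_2)$; $\mathrm{rot}(A|b)=A$, $\mathrm{trans}(A|b)=b$. A subgroup is discrete if all its orbits are discrete. Standing setting: $d=d_1+d_2$ with $d_1,d_2\in\mathbb N_0$; $\mathcal S<\mathrm E(d_2)$ is a space group (a discrete subgroup containing $d_2$ translations $(I|b)$ with linearly independent $b$'s) with translation subgroup $\mathcal T_{\mathcal S}$; for $A\in\mathrm O(d_1)$, $(B|b)\in\mathrm E(d_2)$ put $A\oplus(B|b)=(\mathrm{diag}(A,B)\,|\,(0,b))\in\mathrm E(d)$. $\mathcal G$ is a discrete subgroup of $\mathrm E(d)$ contained in $\{A\oplus s:A\in\mathrm O(d_1),s\in\mathcal S\}$ whose image under $\pi(A\oplus s)=s$ is all of $\mathcal S$. $\mathcal T\subset\mathcal G$ is a set such that $\pi|_{\mathcal T}$ is a bijection onto $\mathcal T_{\mathcal S}$. There is $m_0\in\mathbb N$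 such that $\mathcal T^N:=\{t^N:t\in\mathcal T\}$ is a normal subgroup of $\mathcal G$ iff $N\in\mathcal M:=m_0\mathbb N$; for such $N$, $\mathcal T^N\cong\mathbb Z^{d_2}$ has finite index in $\mathcal G$, and $\mathcal C_N\subset\mathcal G$ is a fixed set of representatives of $\mathcal G/\mathcal T^N$. A map $u$ on $\mathcal G$ is $\mathcal T^N$-periodic if $u(gt)=u(g)$ for all $g\in\mathcal G$, $t\in\mathcal T^N$, and periodic if it is $\mathcal T^N$-periodic for some $N\in\mathcal M$; $U_{\mathrm{per}}$ is the space of periodic $u:\mathcal G\to\mathbb R^d$. $x_0\in\mathbb R^d$ is such that $g\mapsto g\cdot x_0$ is injective on $\mathcal G$; with $d_{\mathrm{aff}}$ the dimension of the affine hull of $\mathcal G\cdot x_0$, it is assumed that $\mathcal G\cdot x_0\subset\{0_{d-d_{\mathrm{aff}}}\}\times\mathbb R^{d_{\mathrm{aff}}}$ and $\mathcal G$ acts trivially on $\mathbb R^{d-d_{\mathrm{aff}}}\times\{0_{d_{\mathrm{aff}}}\}$. Definitions: for $\mathcal R\subset\mathcal G$, $U_{\mathrm{trans}}(\mathcal R)=\{u:\mathcal R\to\mathbb R^d:\exists a\in\mathbb R^d\ \forall g\in\mathcal R:\ \mathrm{rot}(g)u(g)=a\}$, $U_{\mathrm{rot}}(\mathcal R)=\{u:\mathcal R\to\mathbb R^d:\exists S\in\mathrm{Skew}(d)\ \forall g\in\mathcal R:\ \mathrm{rot}(g)u(g)=S(g\cdot x_0-x_0)\}$, $U_{\mathrm{iso}}(\mathcal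 R)=U_{\mathrm{trans}}(\mathcal R)+U_{\mathrm{rot}}(\mathcal R)$. For finite $\mathcal R$, $(\mathbb R^d)^{\mathcal R}$ carries the norm $\|v\|=(\sum_{h\in\mathcal R}|v(h)|^2)^{1/2}$ and $\mathrm{dist}$ is the induced distance to a subspace. For $u\in U_{\mathrm{per}}$ $\mathcal T^N$-periodic: $\|u\|_{\mathcal R}=\big(\frac1{|\mathcal C_N|}\sum_{g\in\mathcal C_N}\mathrm{dist}(u(g\,\cdot)|_{\mathcal R},U_{\mathrm{iso}}(\mathcal R))^2\big)^{1/2}$; the discrete derivative is $\nabla_{\mathcal R}u(g)\in(\mathbb R^d)^{\mathcal R}$, $\nabla_{\mathcal R}u(g)(h)=u(gh)-\mathrm{rot}(h)^Tu(g)$; and $[u]_{\mathcal R}=\big(\frac1{|\mathcal C_N|}\sum_{g\in\mathcal C_N}\mathrm{dist}(\nabla_{\mathcal R}u(g),U_{\mathrm{rot}}(\mathcal R))^2\big)^{1/2}$. *)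

theory Defs
  imports Complex_Main "Jordan_Normal_Form.Matrix"
begin

type_synonym eucl = "real mat \<times> real vec"

definition orth :: "nat \<Rightarrow> real mat set" where
  "orth n = {A. A \<in> carrier_mat n n \<and> transpose_mat A * A = 1\<^sub>m n}"

definition Eucl :: "nat \<Rightarrow> eucl set" where
  "Eucl n = {(A, b). A \<in> orth n \<and> b \<in> carrier_vec n}"

definition rot :: "eucl \<Rightarrow> real mat" where "rot g = fst g"
definition trans :: "eucl \<Rightarrow> real vec" where "trans g = snd g"

definition emult :: "eucl \<Rightarrow> eucl \<Rightarrow> eucl" (infixl "\<star>" 70) where
  "g \<star> h = (rot g * rot h, trans g + rot g *\<^sub>v trans h)"

definition eone :: "nat \<Rightarrow> eucl" where "eone n = (1\<^sub>m n, 0\<^sub>v n)"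

definition einv :: "eucl \<Rightarrow> eucl" where
  "einv g = (transpose_mat (rot g), - (transpose_mat (rot g) *\<^sub>v trans g))"

definition act :: "eucl \<Rightarrow> real vec \<Rightarrow> real vec" where
  "act g x = rot g *\<^sub>v x + trans g"

fun epow :: "nat \<Rightarrow> eucl \<Rightarrow> nat \<Rightarrow> eucl" where
  "epow n g 0 = eone n"
| "epow n g (Suc k) = epow n g k \<star> g"

definition vnorm :: "real vec \<Rightarrow> real" where "vnorm v = sqrt (v \<bullet> v)"
definition vdist :: "real vec \<Rightarrow> real vec \<Rightarrow> real" where "vdist x y = vnorm (x - y)"

definition discrete_set :: "real vec set \<Rightarrow> bool" where
  "discrete_set P \<longleftrightarrow> (\<forall>y\<in>P. \<exists>e>0. \<forall>z\<in>P. z \<noteq> y \<longrightarrow> vdist z y \<ge> e)"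

definition is_subgroup :: "nat \<Rightarrow> eucl set \<Rightarrow> eucl set \<Rightarrow> bool" where
  "is_subgroup n H K \<longleftrightarrow> H \<subseteq> K \<and> eone n \<in> H \<and>
     (\<forall>g\<in>H. \<forall>h\<in>H. g \<star> h \<in> H) \<and> (\<forall>g\<in>H. einv g \<in> H)"

definition is_normal_subgroup :: "nat \<Rightarrow> eucl set \<Rightarrow> eucl set \<Rightarrow> bool" where
  "is_normal_subgroup n H K \<longleftrightarrow> is_subgroup n H K \<and>
     (\<forall>g\<in>K. \<forall>h\<in>H. g \<star> h \<star> einv g \<in> H)"

definition discrete_subgroup :: "nat \<Rightarrow> eucl set \<Rightarrow> bool" where
  "discrete_subgroup n H \<longleftrightarrow> is_subgroup n H (Eucl n) \<and>
     (\<forall>x\<in>carrier_vec n. discrete_set ((\<lambda>g. act g x) ` H))"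

definition lin_indep_vecs :: "nat \<Rightarrow> nat \<Rightarrow> (nat \<Rightarrow> real vec) \<Rightarrow> bool" where
  "lin_indep_vecs n k bs \<longleftrightarrow> (\<forall>i<k. bs i \<in> carrier_vec n) \<and>
     (\<forall>c :: nat \<Rightarrow> real. (\<forall>j<n. (\<Sum>i<k. c i * (bs i $ j)) = 0) \<longrightarrow> (\<forall>i<k. c i = 0))"

definition space_group :: "nat \<Rightarrow> eucl set \<Rightarrow> bool" where
  "space_group n S \<longleftrightarrow> discrete_subgroup n S \<and>
     (\<exists>bs. lin_indep_vecs n n bs \<and> (\<forall>i<n. (1\<^sub>m n, bs i) \<in> S))"

definition transl_subgroup :: "nat \<Rightarrow> eucl set \<Rightarrow> eucl set" where
  "transl_subgroup n S = {s \<in> S. rot s = 1\<^sub>m n}"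

definition dsum :: "nat \<Rightarrow> nat \<Rightarrow> real mat \<Rightarrow> eucl \<Rightarrow> eucl" where
  "dsum d1 d2 A s = (four_block_mat A (0\<^sub>m d1 d2) (0\<^sub>m d2 d1) (rot s), 0\<^sub>v d1 @\<^sub>v trans s)"

definition proj :: "nat \<Rightarrow> nat \<Rightarrow> eucl \<Rightarrow> eucl" where
  "proj d1 d2 g = (mat d2 d2 (\<lambda>(i, j). rot g $$ (d1 + i, d1 + j)), vec_last (trans g) d2)"

definition Tpow :: "nat \<Rightarrow> eucl set \<Rightarrow> nat \<Rightarrow> eucl set" where
  "Tpow n T N = (\<lambda>t. epow n t N) ` T"

definition aff_dimension :: "nat \<Rightarrow> real vec set \<Rightarrow> nat" where
  "aff_dimension n P = (GREATEST k. \<exists>p0\<in>P. \<exists>p. (\<forall>i<k. p i \<in> P) \<and>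
       lin_indep_vecs n k (\<lambda>i. p i - p0))"

definition periodic_wrt :: "eucl set \<Rightarrow> eucl set \<Rightarrow> (eucl \<Rightarrow> real vec) \<Rightarrow> bool" where
  "periodic_wrt G TN u \<longleftrightarrow> (\<forall>g\<in>G. \<forall>t\<in>TN. u (g \<star> t) = u g)"

text \<open>Spaces of functions R \<rightarrow> R^d (values outside R are irrelevant).\<close>
definition U_trans :: "nat \<Rightarrow> eucl set \<Rightarrow> (eucl \<Rightarrow> real vec) set" where
  "U_trans d R = {w. (\<forall>g\<in>R. w g \<in> carrier_vec d) \<and>
      (\<exists>a\<in>carrier_vec d. \<forall>g\<in>R. rot g *\<^sub>v w g = a)}"

definition skew :: "nat \<Rightarrow> real mat set" where
  "skew d = {S. S \<in> carrier_mat d d \<and> transpose_mat S = - S}"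

definition U_rot :: "nat \<Rightarrow> real vec \<Rightarrow> eucl set \<Rightarrow> (eucl \<Rightarrow> real vec) set" where
  "U_rot d x0 R = {w. (\<forall>g\<in>R. w g \<in> carrier_vec d) \<and>
      (\<exists>S\<in>skew d. \<forall>g\<in>R. rot g *\<^sub>v w g = S *\<^sub>v (act g x0 - x0))}"

definition U_iso :: "nat \<Rightarrow> real vec \<Rightarrow> eucl set \<Rightarrow> (eucl \<Rightarrow> real vec) set" where
  "U_iso d x0 R = {(\<lambda>g. w1 g + w2 g) | w1 w2. w1 \<in> U_trans d R \<and> w2 \<in> U_rot d x0 R}"

definition fnorm :: "eucl set \<Rightarrow> (eucl \<Rightarrow> real vec) \<Rightarrow> real" where
  "fnorm R v = sqrt (\<Sum>h\<in>R. (v h) \<bullet> (v h))"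

definition fdist :: "eucl set \<Rightarrow> (eucl \<Rightarrow> real vec) \<Rightarrow> (eucl \<Rightarrow> real vec) set \<Rightarrow> real" where
  "fdist R v U = Inf {fnorm R (\<lambda>h. v h - w h) | w. w \<in> U}"

definition disc_grad :: "eucl set \<Rightarrow> (eucl \<Rightarrow> real vec) \<Rightarrow> eucl \<Rightarrow> (eucl \<Rightarrow> real vec)" where
  "disc_grad R u g = (\<lambda>h. u (g \<star> h) - transpose_mat (rot h) *\<^sub>v u g)"

text \<open>The two seminorms, for a T^N-periodic u, with representatives CN of G/T^N.\<close>
definition seminormR :: "nat \<Rightarrow> real vec \<Rightarrow> eucl set \<Rightarrow> eucl set \<Rightarrow> (eucl \<Rightarrow> real vec) \<Rightarrow> real" where
  "seminormR d x0 R CN u = sqrt ((1 / real (card CN)) *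
      (\<Sum>g\<in>CN. (fdist R (\<lambda>h. u (g \<star> h)) (U_iso d x0 R))\<^sup>2))"

definition seminorm_grad :: "nat \<Rightarrow> real vec \<Rightarrow> eucl set \<Rightarrow> eucl set \<Rightarrow> (eucl \<Rightarrow> real vec) \<Rightarrow> real" where
  "seminorm_grad d x0 R CN u = sqrt ((1 / real (card CN)) *
      (\<Sum>g\<in>CN. (fdist R (disc_grad R u g) (U_rot d x0 R))\<^sup>2))"

end

theory Submission
  imports Defs "HOL-Analysis.L2_Norm" "Jordan_Normal_Form.Determinant"
begin


lemma orth_carrier: "Q \<in> orth d \<Longrightarrow> Q \<in> carrier_mat d d"
  by (simp add: orth_def)

lemma orth_inv: assumes "Q \<in> orth d" shows "Q * transpose_mat Q = 1\<^sub>m d"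
proof -
  have Q: "Q \<in> carrier_mat d d" and e: "transpose_mat Q * Q = 1\<^sub>m d" using assms by (auto simp: orth_def)
  show ?thesis by (rule mat_mult_left_right_inverse[OF _ Q e]) (use Q in auto)
qed

lemma orth_rt: assumes "Q \<in> orth d" "a \<in> carrier_vec d"
  shows "Q *\<^sub>v (transpose_mat Q *\<^sub>v a) = a"
proof -
  have Q: "Q \<in> carrier_mat d d" using assms by (auto simp: orth_def)
  have "Q *\<^sub>v (transpose_mat Q *\<^sub>v a) = (Q * transpose_mat Q) *\<^sub>v a"
    using Q assms(2) by (subst assoc_mult_mat_vec) auto
  also have "\<dots> = a" using orth_inv[OF assms(1)] assms(2) by simp
  finally show ?thesis .
qed

lemma orth_norm: assumes "Q \<in> orth d" "a \<in> carrier_vec d"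
  shows "(transpose_mat Q *\<^sub>v a) \<bullet> (transpose_mat Q *\<^sub>v a) = a \<bullet> a"
proof -
  have Q: "Q \<in> carrier_mat d d" using assms by (auto simp: orth_def)
  have "(transpose_mat Q *\<^sub>v a) \<bullet> (transpose_mat Q *\<^sub>v a) = a \<bullet> (Q *\<^sub>v (transpose_mat Q *\<^sub>v a))"
    by (rule transpose_vec_mult_scalar[OF Q _ assms(2)]) (use Q assms(2) in auto)
  then show ?thesis using orth_rt[OF assms] by simp
qed

lemma sp_self_nonneg: "0 \<le> (v::real vec) \<bullet> v"
  unfolding scalar_prod_def by (auto intro: sum_nonneg)

lemma fnorm_cong: "(\<And>h. h \<in> R \<Longrightarrow> v h = v' h) \<Longrightarrow> fnorm R v = fnorm R v'"
  unfolding fnorm_def by (simp cong: sum.cong)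

lemma fnorm_nonneg: "0 \<le> fnorm R v"
  unfolding fnorm_def by (simp add: sum_nonneg sp_self_nonneg)

lemma fnorm_L2: assumes "\<And>h. h \<in> R \<Longrightarrow> v h \<in> carrier_vec d"
  shows "fnorm R v = L2_set (\<lambda>p. v (fst p) $ snd p) (R \<times> {..<d})"
proof -
  have "(\<Sum>h\<in>R. v h \<bullet> v h) = (\<Sum>h\<in>R. \<Sum>i\<in>{..<d}. (v h $ i)^2)"
  proof (rule sum.cong[OF refl])
    fix h assume "h \<in> R"
    then have "dim_vec (v h) = d" using assms by auto
    then show "v h \<bullet> v h = (\<Sum>i\<in>{..<d}. (v h $ i)^2)"
      by (simp add: scalar_prod_def power2_eq_square lessThan_atLeast0)
  qed
  also have "\<dots> = (\<Sum>p\<in>R \<times> {..<d}. (v (fst p) $ snd p)^2)"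
    by (subst sum.cartesian_product) (simp add: case_prod_beta)
  finally show ?thesis unfolding fnorm_def L2_set_def by simp
qed

lemma fnorm_tri: assumes "\<And>h. h \<in> R \<Longrightarrow> x h \<in> carrier_vec d" "\<And>h. h \<in> R \<Longrightarrow> y h \<in> carrier_vec d"
  shows "fnorm R (\<lambda>h. x h - y h) \<le> fnorm R x + fnorm R y"
proof -
  have "fnorm R (\<lambda>h. x h - y h) = L2_set (\<lambda>p. x (fst p) $ snd p + (- (y (fst p) $ snd p))) (R \<times> {..<d})"
  proof (subst fnorm_L2[where d=d])
    show "\<And>h. h \<in> R \<Longrightarrow> x h - y h \<in> carrier_vec d" using assms by auto
    show "L2_set (\<lambda>p. (x (fst p) - y (fst p)) $ snd p) (R \<times> {..<d}) =
      L2_set (\<lambda>p. x (fst p) $ snd p + - y (fst p) $ snd p) (R \<times> {..<d})"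
    proof (rule L2_set_cong[OF refl])
      fix p assume "p \<in> R \<times> {..<d}"
      then have "fst p \<in> R" "snd p < d" by auto
      then show "(x (fst p) - y (fst p)) $ snd p = x (fst p) $ snd p + - y (fst p) $ snd p"
        using assms(2)[of "fst p"] by simp
    qed
  qed
  also have "\<dots> \<le> L2_set (\<lambda>p. x (fst p) $ snd p) (R \<times> {..<d}) + L2_set (\<lambda>p. - (y (fst p) $ snd p)) (R \<times> {..<d})"
    by (rule L2_set_triangle_ineq)
  also have "L2_set (\<lambda>p. - (y (fst p) $ snd p)) (R \<times> {..<d}) = L2_set (\<lambda>p. y (fst p) $ snd p) (R \<times> {..<d})"
    unfolding L2_set_def by simp
  finally show ?thesis using assms by (simp add: fnorm_L2[where d=d])
qed

lemma fnorm_member: assumes "finite R" "e \<in> R"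
  shows "sqrt (v e \<bullet> v e) \<le> fnorm R v"
  unfolding fnorm_def
  by (rule real_sqrt_le_mono, rule member_le_sum[OF assms(2)]) (auto simp: sp_self_nonneg assms(1))

lemma fnorm_tau: assumes "\<And>h. h \<in> R \<Longrightarrow> rot h \<in> orth d" "a \<in> carrier_vec d"
  shows "fnorm R (\<lambda>h. transpose_mat (rot h) *\<^sub>v a) = sqrt (real (card R)) * sqrt (a \<bullet> a)"
proof -
  have "(\<Sum>h\<in>R. (transpose_mat (rot h) *\<^sub>v a) \<bullet> (transpose_mat (rot h) *\<^sub>v a)) = (\<Sum>h\<in>R. a \<bullet> a)"
    by (rule sum.cong[OF refl]) (rule orth_norm[OF assms(1) assms(2)])
  then show ?thesis unfolding fnorm_def by (simp add: real_sqrt_mult)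
qed

lemma fdist_le: "w \<in> U \<Longrightarrow> fdist R v U \<le> fnorm R (\<lambda>h. v h - w h)"
  unfolding fdist_def
  by (rule cInf_lower) (auto intro: bdd_belowI[where m=0] simp: fnorm_nonneg)

lemma fdist_ge: "U \<noteq> {} \<Longrightarrow> (\<And>w. w \<in> U \<Longrightarrow> K \<le> fnorm R (\<lambda>h. v h - w h)) \<Longrightarrow> K \<le> fdist R v U"
  unfolding fdist_def by (rule cInf_greatest) auto

lemma fdist_nonneg: "U \<noteq> {} \<Longrightarrow> 0 \<le> fdist R v U"
  by (rule fdist_ge) (auto simp: fnorm_nonneg)


lemma zero_U_rot: assumes "\<And>h. h \<in> R \<Longrightarrow> rot h \<in> orth d"
   and actc: "\<And>h. h \<in> R \<Longrightarrow> act h x0 - x0 \<in> carrier_vec d"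
  shows "(\<lambda>_. 0\<^sub>v d) \<in> U_rot d x0 R"
proof -
  have sk: "0\<^sub>m d d \<in> skew d" unfolding skew_def by (auto intro!: eq_matI)
  have "\<forall>g\<in>R. rot g *\<^sub>v 0\<^sub>v d = 0\<^sub>m d d *\<^sub>v (act g x0 - x0)"
  proof
    fix g assume "g \<in> R"
    then have "rot g \<in> carrier_mat d d" "act g x0 - x0 \<in> carrier_vec d" using assms orth_carrier by blast+
    then show "rot g *\<^sub>v 0\<^sub>v d = 0\<^sub>m d d *\<^sub>v (act g x0 - x0)"
      by (intro eq_vecI) auto
  qed
  then show ?thesis unfolding U_rot_def using sk by auto
qed

lemma zero_U_trans: assumes "\<And>h. h \<in> R \<Longrightarrow> rot h \<in> orth d"
  shows "(\<lambda>_. 0\<^sub>v d) \<in> U_trans d R"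
proof -
  have "\<forall>g\<in>R. rot g *\<^sub>v 0\<^sub>v d = 0\<^sub>v d"
  proof
    fix g assume "g \<in> R"
    then have "rot g \<in> carrier_mat d d" using assms orth_carrier by blast
    then show "rot g *\<^sub>v 0\<^sub>v d = 0\<^sub>v d"
      by (intro eq_vecI) auto
  qed
  then show ?thesis unfolding U_trans_def by auto
qed

lemma U_iso_ne: assumes "\<And>h. h \<in> R \<Longrightarrow> rot h \<in> orth d"
   and actc: "\<And>h. h \<in> R \<Longrightarrow> act h x0 - x0 \<in> carrier_vec d"
  shows "U_iso d x0 R \<noteq> {}"
  using zero_U_rot[OF assms] zero_U_trans[OF assms(1)] unfolding U_iso_def by blast

lemma U_rot_ne: assumes "\<And>h. h \<in> R \<Longrightarrow> rot h \<in> orth d"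
   and actc: "\<And>h. h \<in> R \<Longrightarrow> act h x0 - x0 \<in> carrier_vec d"
  shows "U_rot d x0 R \<noteq> {}"
  using zero_U_rot[OF assms] by blast

lemma vec_alg1: "a \<in> carrier_vec d \<Longrightarrow> b \<in> carrier_vec d \<Longrightarrow> c \<in> carrier_vec d \<Longrightarrow>
  a - (b + c) = a - b - (c :: real vec)"
  by (intro eq_vecI) auto

lemma lower_pt:
  assumes orthR: "\<And>h. h \<in> R \<Longrightarrow> rot h \<in> orth d"
    and actc: "\<And>h. h \<in> R \<Longrightarrow> act h x0 - x0 \<in> carrier_vec d"
    and e1: "eone d \<in> R"
    and wc: "\<And>h. h \<in> R \<Longrightarrow> w h \<in> carrier_vec d"
  shows "fdist R w (U_iso d x0 R) \<le>
    fdist R (\<lambda>h. w h - transpose_mat (rot h) *\<^sub>v w (eone d)) (U_rot d x0 R)"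
proof (rule fdist_ge[OF U_rot_ne[OF orthR actc]])
  fix z assume z: "z \<in> U_rot d x0 R"
  define a where "a = w (eone d)"
  have a: "a \<in> carrier_vec d" using wc e1 a_def by auto
  define \<tau> where "\<tau> = (\<lambda>h. transpose_mat (rot h) *\<^sub>v a)"
  have \<tau>c: "\<tau> h \<in> carrier_vec d" if "h \<in> R" for h
    using orthR[OF that] a unfolding \<tau>_def orth_def by auto
  have "\<tau> \<in> U_trans d R" unfolding U_trans_def
    using \<tau>c a orth_rt[OF orthR a] unfolding \<tau>_def by auto
  then have "(\<lambda>h. \<tau> h + z h) \<in> U_iso d x0 R" using z unfolding U_iso_def by blast
  then have "fdist R w (U_iso d x0 R) \<le> fnorm R (\<lambda>h. w h - (\<tau> h + z h))"
    by (rule fdist_le)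
  also have "\<dots> = fnorm R (\<lambda>h. (w h - transpose_mat (rot h) *\<^sub>v w (eone d)) - z h)"
  proof (rule fnorm_cong)
    fix h assume h: "h \<in> R"
    have "z h \<in> carrier_vec d" using z h unfolding U_rot_def by auto
    then show "w h - (\<tau> h + z h) = (w h - transpose_mat (rot h) *\<^sub>v w (eone d)) - z h"
      using vec_alg1[OF wc[OF h] \<tau>c[OF h]] unfolding \<tau>_def a_def by simp
  qed
  finally show "fdist R w (U_iso d x0 R) \<le> fnorm R (\<lambda>h. (w h - transpose_mat (rot h) *\<^sub>v w (eone d)) - z h)" .
qed


lemma vec_alg2: "wh \<in> carrier_vec d \<Longrightarrow> X \<in> carrier_vec d \<Longrightarrow> Y \<in> carrier_vec d \<Longrightarrow> z \<in> carrier_vec d \<Longrightarrow>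
  wh - X - z = (wh - (Y + z)) - (X - (Y :: real vec))"
  by (intro eq_vecI) auto

lemma upper_pt:
  assumes orthR: "\<And>h. h \<in> R \<Longrightarrow> rot h \<in> orth d"
    and actc: "\<And>h. h \<in> R \<Longrightarrow> act h x0 - x0 \<in> carrier_vec d"
    and x0: "x0 \<in> carrier_vec d"
    and fin: "finite R"
    and e1: "eone d \<in> R"
    and wc: "\<And>h. h \<in> R \<Longrightarrow> w h \<in> carrier_vec d"
  shows "fdist R (\<lambda>h. w h - transpose_mat (rot h) *\<^sub>v w (eone d)) (U_rot d x0 R)
     \<le> (1 + sqrt (real (card R))) * fdist R w (U_iso d x0 R)"
proof -
  define K where "K = 1 + sqrt (real (card R))"
  have Kpos: "K > 0" unfolding K_def by (simp add: add_pos_nonneg)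
  let ?P = "\<lambda>h. w h - transpose_mat (rot h) *\<^sub>v w (eone d)"
  have rtc: "transpose_mat (rot h) *\<^sub>v v \<in> carrier_vec d" if "h \<in> R" "v \<in> carrier_vec d" for h v
    using orthR[OF that(1)] that(2) unfolding orth_def by auto
  have "fdist R ?P (U_rot d x0 R) / K \<le> fdist R w (U_iso d x0 R)"
  proof (rule fdist_ge[OF U_iso_ne[OF orthR actc]])
    fix w' assume "w' \<in> U_iso d x0 R"
    then obtain w1 w2 where w': "w' = (\<lambda>g. w1 g + w2 g)" and w1: "w1 \<in> U_trans d R"
      and w2: "w2 \<in> U_rot d x0 R" unfolding U_iso_def by blast
    obtain a where a: "a \<in> carrier_vec d" and ha: "\<And>g. g \<in> R \<Longrightarrow> rot g *\<^sub>v w1 g = a"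
      and w1c: "\<And>g. g \<in> R \<Longrightarrow> w1 g \<in> carrier_vec d"
      using w1 unfolding U_trans_def by blast
    obtain S where S: "S \<in> skew d" and hS: "\<And>g. g \<in> R \<Longrightarrow> rot g *\<^sub>v w2 g = S *\<^sub>v (act g x0 - x0)"
      and w2c: "\<And>g. g \<in> R \<Longrightarrow> w2 g \<in> carrier_vec d"
      using w2 unfolding U_rot_def by blast
    have w1eq: "w1 h = transpose_mat (rot h) *\<^sub>v a" if h: "h \<in> R" for h
    proof -
      have Q: "rot h \<in> carrier_mat d d" "transpose_mat (rot h) * rot h = 1\<^sub>m d"
        using orthR[OF h] unfolding orth_def by auto
      have "transpose_mat (rot h) *\<^sub>v a = transpose_mat (rot h) *\<^sub>v (rot h *\<^sub>v w1 h)" using ha[OF h] by simp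
      also have "\<dots> = (transpose_mat (rot h) * rot h) *\<^sub>v w1 h"
        using Q w1c[OF h] by (subst assoc_mult_mat_vec) auto
      also have "\<dots> = w1 h" using Q w1c[OF h] by simp
      finally show ?thesis by simp
    qed
    have rot1: "rot (eone d) = 1\<^sub>m d" "trans (eone d) = 0\<^sub>v d" by (auto simp: rot_def trans_def eone_def)
    have act1: "act (eone d) x0 - x0 = 0\<^sub>v d" unfolding act_def rot1 using x0 by (intro eq_vecI) auto
    have w2e: "w2 (eone d) = 0\<^sub>v d"
    proof -
      have "w2 (eone d) = rot (eone d) *\<^sub>v w2 (eone d)" using rot1 w2c[OF e1] by simp
      also have "\<dots> = S *\<^sub>v 0\<^sub>v d" using hS[OF e1] act1 by simp
      also have "\<dots> = 0\<^sub>v d" using S unfolding skew_def by (intro eq_vecI) auto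
      finally show ?thesis .
    qed
    have w1e: "w1 (eone d) = a" using ha[OF e1] rot1 w1c[OF e1] by simp
    define e where "e = (\<lambda>h. w h - w' h)"
    have ec: "e h \<in> carrier_vec d" if "h \<in> R" for h
      using that wc w1c w2c unfolding e_def w' by auto
    have ee: "e (eone d) = w (eone d) - a"
      unfolding e_def w' w1e w2e using a by (intro eq_vecI) auto
    have "fdist R ?P (U_rot d x0 R) \<le> fnorm R (\<lambda>h. ?P h - w2 h)" by (rule fdist_le[OF w2])
    also have "\<dots> = fnorm R (\<lambda>h. e h - transpose_mat (rot h) *\<^sub>v e (eone d))"
    proof (rule fnorm_cong)
      fix h assume h: "h \<in> R"
      have Q: "rot h \<in> carrier_mat d d" using orthR[OF h] unfolding orth_def by auto
      have "transpose_mat (rot h) *\<^sub>v e (eone d) = transpose_mat (rot h) *\<^sub>v w (eone d) - transpose_mat (rot h) *\<^sub>v a"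
        unfolding ee using Q a wc[OF e1] by (subst mult_minus_distrib_mat_vec) auto
      then show "?P h - w2 h = e h - transpose_mat (rot h) *\<^sub>v e (eone d)"
        unfolding e_def w' w1eq[OF h]
        using vec_alg2[OF wc[OF h] rtc[OF h wc[OF e1]] rtc[OF h a] w2c[OF h]] by simp
    qed
    also have "\<dots> \<le> fnorm R e + fnorm R (\<lambda>h. transpose_mat (rot h) *\<^sub>v e (eone d))"
      by (rule fnorm_tri[where d=d]) (auto intro: ec rtc ec[OF e1])
    also have "fnorm R (\<lambda>h. transpose_mat (rot h) *\<^sub>v e (eone d)) = sqrt (real (card R)) * sqrt (e (eone d) \<bullet> e (eone d))"
      by (rule fnorm_tau[OF orthR ec[OF e1]])
    also have "\<dots> \<le> sqrt (real (card R)) * fnorm R e"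
      by (rule mult_left_mono[OF fnorm_member[OF fin e1]]) simp
    finally have "fdist R ?P (U_rot d x0 R) \<le> K * fnorm R e" unfolding K_def by (simp add: algebra_simps)
    then show "fdist R ?P (U_rot d x0 R) / K \<le> fnorm R (\<lambda>h. w h - w' h)"
      using Kpos unfolding e_def by (simp add: divide_simps mult.commute)
  qed
  then show ?thesis using Kpos unfolding K_def[symmetric] by (simp add: divide_simps mult.commute)
qed

theorem proposition3p7:
  fixes d1 d2 d m0 :: nat
    and S G T :: "eucl set"
    and C :: "nat \<Rightarrow> eucl set"
    and x0 :: "real vec"
    and R :: "eucl set"
  assumes d_def: "d = d1 + d2"
    and S_space: "space_group d2 S"
    and G_discrete: "discrete_subgroup d G"
    and G_sub: "G \<subseteq> {dsum d1 d2 A s | A s. A \<in> orth d1 \<and> s \<in> S}"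
    and G_onto: "proj d1 d2 ` G = S"
    and T_sub: "T \<subseteq> G"
    and T_bij: "bij_betw (proj d1 d2) T (transl_subgroup d2 S)"
    and m0_pos: "m0 \<ge> 1"
    and m0_char: "\<forall>N\<ge>1. is_normal_subgroup d (Tpow d T N) G \<longleftrightarrow> m0 dvd N"
    and TN_lattice: "\<forall>N. N \<ge> 1 \<and> m0 dvd N \<longrightarrow>
        (\<exists>f :: (nat \<Rightarrow> int) \<Rightarrow> eucl. bij_betw f {k. \<forall>i\<ge>d2. k i = 0} (Tpow d T N) \<and>
           (\<forall>k l. (\<forall>i\<ge>d2. k i = 0) \<longrightarrow> (\<forall>i\<ge>d2. l i = 0) \<longrightarrow> f (\<lambda>i. k i + l i) = f k \<star> f l))"
    and TN_finite_index: "\<forall>N. N \<ge> 1 \<and> m0 dvd N \<longrightarrow>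
        finite ((\<lambda>g. (\<lambda>t. g \<star> t) ` Tpow d T N) ` G)"
    and C_reps: "\<forall>N. N \<ge> 1 \<and> m0 dvd N \<longrightarrow> C N \<subseteq> G \<and>
        (\<forall>g\<in>G. \<exists>!c. c \<in> C N \<and> (\<exists>t\<in>Tpow d T N. g = c \<star> t))"
    and x0_dim: "x0 \<in> carrier_vec d"
    and x0_inj: "inj_on (\<lambda>g. act g x0) G"
    and x0_aff: "\<exists>daff \<le> d. aff_dimension d ((\<lambda>g. act g x0) ` G) = daff \<and>
        (\<forall>g\<in>G. \<forall>i < d - daff. act g x0 $ i = 0) \<and>
        (\<forall>g\<in>G. \<forall>y\<in>carrier_vec d. (\<forall>i. d - daff \<le> i \<and> i < d \<longrightarrow> y $ i = 0) \<longrightarrow>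
            rot g *\<^sub>v y = y)"
    and R_fin: "finite R"
    and R_sub: "R \<subseteq> G"
    and R_id: "eone d \<in> R"
  shows "\<exists>c Cc. c > 0 \<and> Cc > 0 \<and>
    (\<forall>N u. N \<ge> 1 \<and> m0 dvd N \<longrightarrow> (\<forall>g\<in>G. u g \<in> carrier_vec d) \<longrightarrow>
       periodic_wrt G (Tpow d T N) u \<longrightarrow>
       c * seminormR d x0 R (C N) u \<le> seminorm_grad d x0 R (C N) u \<and>
       seminorm_grad d x0 R (C N) u \<le> Cc * seminormR d x0 R (C N) u)"
proof -
  have sub: "is_subgroup d G (Eucl d)" using G_discrete unfolding discrete_subgroup_def by blast
  have GE: "\<And>g. g \<in> G \<Longrightarrow> rot g \<in> orth d \<and> trans g \<in> carrier_vec d"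
    using sub unfolding is_subgroup_def Eucl_def rot_def trans_def by auto
  have Gmul: "\<And>g h. g \<in> G \<Longrightarrow> h \<in> G \<Longrightarrow> g \<star> h \<in> G" using sub unfolding is_subgroup_def by blast
  have orthR: "\<And>h. h \<in> R \<Longrightarrow> rot h \<in> orth d" using R_sub GE by blast
  have actc: "\<And>h. h \<in> R \<Longrightarrow> act h x0 - x0 \<in> carrier_vec d"
  proof -
    fix h assume "h \<in> R"
    then have "rot h \<in> carrier_mat d d" "trans h \<in> carrier_vec d" using R_sub GE orth_carrier by blast+
    then show "act h x0 - x0 \<in> carrier_vec d" using x0_dim unfolding act_def by auto
  qed
  define K where "K = 1 + sqrt (real (card R))"
  have Kpos: "K > 0" unfolding K_def by (simp add: add_pos_nonneg)
  have main: "1 * seminormR d x0 R (C N) u \<le> seminorm_grad d x0 R (C N) u \<and>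
       seminorm_grad d x0 R (C N) u \<le> K * seminormR d x0 R (C N) u"
    if N: "N \<ge> 1 \<and> m0 dvd N" and uc: "\<forall>g\<in>G. u g \<in> carrier_vec d" for N and u :: "eucl \<Rightarrow> real vec"
  proof -
    have CG: "C N \<subseteq> G" using C_reps N by blast
    define a where "a = (\<lambda>g. fdist R (\<lambda>h. u (g \<star> h)) (U_iso d x0 R))"
    define b where "b = (\<lambda>g. fdist R (disc_grad R u g) (U_rot d x0 R))"
    have ab: "0 \<le> a g \<and> a g \<le> b g \<and> b g \<le> K * a g" if g: "g \<in> C N" for g
    proof -
      have gG: "g \<in> G" using g CG by blast
      have wc: "\<And>h. h \<in> R \<Longrightarrow> u (g \<star> h) \<in> carrier_vec d" using uc Gmul gG R_sub by blast
      have ge: "g \<star> eone d = g"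
      proof -
        have "rot g \<in> carrier_mat d d" "trans g \<in> carrier_vec d" using GE[OF gG] orth_carrier by blast+
        then show ?thesis unfolding emult_def eone_def rot_def trans_def
          by (cases g) auto
      qed
      have dg: "disc_grad R u g = (\<lambda>h. u (g \<star> h) - transpose_mat (rot h) *\<^sub>v u (g \<star> eone d))"
        unfolding disc_grad_def ge ..
      have "0 \<le> a g" unfolding a_def by (rule fdist_nonneg[OF U_iso_ne[OF orthR actc]])
      moreover have "a g \<le> b g" unfolding a_def b_def dg
        by (rule lower_pt[OF orthR actc R_id wc])
      moreover have "b g \<le> K * a g" unfolding a_def b_def dg K_def
        by (rule upper_pt[OF orthR actc x0_dim R_fin R_id wc])
      ultimately show ?thesis by blast
    qed
    have sa: "seminormR d x0 R (C N) u = sqrt (1 / real (card (C N)) * (\<Sum>g\<in>C N. (a g)\<^sup>2))"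
      unfolding seminormR_def a_def ..
    have sb: "seminorm_grad d x0 R (C N) u = sqrt (1 / real (card (C N)) * (\<Sum>g\<in>C N. (b g)\<^sup>2))"
      unfolding seminorm_grad_def b_def ..
    have "(\<Sum>g\<in>C N. (a g)\<^sup>2) \<le> (\<Sum>g\<in>C N. (b g)\<^sup>2)"
      by (rule sum_mono) (use ab in \<open>auto intro: power_mono\<close>)
    then have A: "1 * seminormR d x0 R (C N) u \<le> seminorm_grad d x0 R (C N) u"
      unfolding sa sb by (auto intro!: real_sqrt_le_mono divide_right_mono)
    have "(\<Sum>g\<in>C N. (b g)\<^sup>2) \<le> (\<Sum>g\<in>C N. (K * a g)\<^sup>2)"
    proof (rule sum_mono)
      fix g assume g: "g \<in> C N"
      have "0 \<le> b g" using ab[OF g] by linarith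
      then show "(b g)\<^sup>2 \<le> (K * a g)\<^sup>2" using ab[OF g] by (auto intro: power_mono)
    qed
    also have "\<dots> = K\<^sup>2 * (\<Sum>g\<in>C N. (a g)\<^sup>2)" by (simp add: power_mult_distrib sum_distrib_left)
    finally have "1 / real (card (C N)) * (\<Sum>g\<in>C N. (b g)\<^sup>2) \<le> K\<^sup>2 * (1 / real (card (C N)) * (\<Sum>g\<in>C N. (a g)\<^sup>2))"
      by (simp add: divide_right_mono)
    then have "seminorm_grad d x0 R (C N) u \<le> sqrt (K\<^sup>2 * (1 / real (card (C N)) * (\<Sum>g\<in>C N. (a g)\<^sup>2)))"
      unfolding sb by (rule real_sqrt_le_mono)
    also have "\<dots> = K * seminormR d x0 R (C N) u"
      unfolding sa using Kpos by (subst real_sqrt_mult) simp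
    finally have B: "seminorm_grad d x0 R (C N) u \<le> K * seminormR d x0 R (C N) u" .
    show ?thesis using A B by blast
  qed
  show ?thesis using Kpos main by (intro exI[of _ 1] exI[of _ K]) auto
qed

end
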